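(* For every $C>1$ and every natural number $L$ there is $n_0\in\mathbb N$ such that the following holds. Let $G=(V_1,V_2,E)$ be a $C$-bipartite-Ramsey graph with $|V_1|,|V_2|\ge n_0$, and put $\varepsilon_i:=(64C)^{-i}$ for $i\in[L]$. Then there are vertices $u_1,\ldots,u_L\in V_1$ such that for all $i\in[L]$, $$\Big|N(u_i)\setminus\bigcup_{j<i}N(u_j)\Big|\ge\varepsilon_i|V_2|\quad\text{and}\quad\Big|V_2\setminus\bigcup_{j\le i}N(u_j)\Big|\ge\varepsilon_i|V_2|.$$
   Context: A bipartite graph $G=(V_1,V_2,E)$ has vertex set $V_1\sqcup V_2$ and edge set $E\subset V_1\times V_2$; $N(u)$ is the neighbourhood of $u$. Given $C>0$, $G$ is called $C$-bipartite-Ramsey if for all integers $t_1\ge C\log_2|V_1|$ and $t_2\ge C\log_2|V_2|$ there are no $T_1\subset V_1$, $T_2\subset V_2$ with $|T_1|=t_1$, $|T_2|=t_2$ such that all pairs in $T_1\times T_2$ are edges, or all are non-edges. $[L]=\{1,\ldots,L\}$. *)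

theory Defs
  imports "HOL-Analysis.Analysis"
begin

definition bipartite_graph :: "'a set \<Rightarrow> 'b set \<Rightarrow> ('a \<times> 'b) set \<Rightarrow> bool" where
  "bipartite_graph V1 V2 E \<longleftrightarrow> finite V1 \<and> finite V2 \<and> E \<subseteq> V1 \<times> V2"

definition nbhd :: "'b set \<Rightarrow> ('a \<times> 'b) set \<Rightarrow> 'a \<Rightarrow> 'b set" where
  "nbhd V2 E u = {v \<in> V2. (u, v) \<in> E}"

definition bipartite_ramsey :: "real \<Rightarrow> 'a set \<Rightarrow> 'b set \<Rightarrow> ('a \<times> 'b) set \<Rightarrow> bool" where
  "bipartite_ramsey C V1 V2 E \<longleftrightarrow>
     (\<forall>t1 t2 :: nat. real t1 \<ge> C * log 2 (real (card V1)) \<longrightarrow> real t2 \<ge> C * log 2 (real (card V2)) \<longrightarrow>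
        \<not> (\<exists>T1 T2. T1 \<subseteq> V1 \<and> T2 \<subseteq> V2 \<and> card T1 = t1 \<and> card T2 = t2 \<and>
               ((T1 \<times> T2 \<subseteq> E) \<or> (T1 \<times> T2) \<inter> E = {})))"

end

theory Submission
  imports Defs "HOL-Real_Asymp.Real_Asymp"
begin


lemma card_filter_sum:
  assumes "finite Y"
  shows "card {y\<in>Y. P y} = (\<Sum>y\<in>Y. if P y then 1 else (0::nat))"
proof -
  have "card {y\<in>Y. P y} = (\<Sum>y\<in>{y\<in>Y. P y}. (1::nat))" by simp
  also have "\<dots> = (\<Sum>y\<in>Y. if P y then 1 else 0)"
    using assms by (simp add: sum.If_cases Collect_conj_eq Int_commute)
  finally show ?thesis .
qed

lemma double_count:
  assumes "finite X" "finite Y"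
  shows "(\<Sum>x\<in>X. card {y\<in>Y. R x y}) = (\<Sum>y\<in>Y. card {x\<in>X. R x y})"
proof -
  have "(\<Sum>x\<in>X. card {y\<in>Y. R x y}) = (\<Sum>x\<in>X. \<Sum>y\<in>Y. if R x y then 1 else (0::nat))"
    using assms by (simp add: card_filter_sum)
  also have "\<dots> = (\<Sum>y\<in>Y. \<Sum>x\<in>X. if R x y then 1 else (0::nat))"
    by (rule sum.swap)
  also have "\<dots> = (\<Sum>y\<in>Y. card {x\<in>X. R x y})"
    using assms by (simp add: card_filter_sum)
  finally show ?thesis .
qed

lemma exists_below_avg:
  fixes f :: "'x \<Rightarrow> real"
  assumes "finite X" "X \<noteq> {}" "sum f X \<le> B"
  shows "\<exists>x\<in>X. f x * card X \<le> B"
proof (rule ccontr)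
  assume "\<not> ?thesis"
  hence h: "\<And>x. x \<in> X \<Longrightarrow> B / card X < f x"
    using assms by (auto simp: field_simps not_le card_gt_0_iff)
  have "(\<Sum>x\<in>X. B / card X) < sum f X"
    using assms h by (intro sum_strict_mono) auto
  hence "B < sum f X" using assms by simp
  thus False using assms by simp
qed

lemma greedy:
  fixes R :: "'x \<Rightarrow> 'y \<Rightarrow> bool" and D :: real
  assumes fin: "finite X" "finite Y"
    and deg: "\<forall>y\<in>Y. real (card {x\<in>X. R x y}) \<le> D"
    and D: "0 \<le> D" "2 * D \<le> real (card X)"
  shows "2 * k \<le> card X \<Longrightarrow> \<exists>S Y'. S \<subseteq> X \<and> card S = k \<and> Y' \<subseteq> Y \<and>
           (\<forall>x\<in>S. \<forall>y\<in>Y'. \<not> R x y) \<and>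
           real (card Y') \<ge> real (card Y) * (1 - 2 * D / card X) ^ k"
proof (induction k)
  case 0
  then show ?case by (intro exI[of _ "{}"] exI[of _ Y]) auto
next
  case (Suc k)
  then obtain S Y' where S: "S \<subseteq> X" "card S = k" "Y' \<subseteq> Y" "\<forall>x\<in>S. \<forall>y\<in>Y'. \<not> R x y"
    and Yb: "real (card Y') \<ge> real (card Y) * (1 - 2 * D / card X) ^ k" by auto
  define X' where "X' = X - S"
  have finX': "finite X'" using fin by (simp add: X'_def)
  have finY': "finite Y'" using fin S(3) finite_subset by blast
  have cX': "card X' = card X - k" using S fin by (simp add: X'_def card_Diff_subset finite_subset)
  have "2 * card X' \<ge> card X" using cX' Suc.prems by arith
  hence cX'2: "2 * real (card X') \<ge> real (card X)" by linarith
  have X'ne: "X' \<noteq> {}" using cX' Suc.prems by auto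
  have cXpos: "real (card X) > 0" using Suc.prems by simp
  have "(\<Sum>x\<in>X'. card {y\<in>Y'. R x y}) = (\<Sum>y\<in>Y'. card {x\<in>X'. R x y})"
    by (rule double_count[OF finX' finY'])
  hence "real (\<Sum>x\<in>X'. card {y\<in>Y'. R x y}) = real (\<Sum>y\<in>Y'. card {x\<in>X'. R x y})"
    by simp
  hence "(\<Sum>x\<in>X'. real (card {y\<in>Y'. R x y})) = (\<Sum>y\<in>Y'. real (card {x\<in>X'. R x y}))"
    by (simp only: of_nat_sum)
  also have "\<dots> \<le> (\<Sum>y\<in>Y'. D)"
  proof (rule sum_mono)
    fix y assume "y \<in> Y'"
    hence "real (card {x\<in>X. R x y}) \<le> D" using deg S(3) by auto
    moreover have "card {x\<in>X'. R x y} \<le> card {x\<in>X. R x y}"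
      using fin by (intro card_mono) (auto simp: X'_def)
    ultimately show "real (card {x\<in>X'. R x y}) \<le> D" by linarith
  qed
  finally have "(\<Sum>x\<in>X'. real (card {y\<in>Y'. R x y})) \<le> real (card Y') * D" by simp
  then obtain x where x: "x \<in> X'" and xb: "real (card {y\<in>Y'. R x y}) * card X' \<le> real (card Y') * D"
    using exists_below_avg[OF finX' X'ne] by blast
  define Y'' where "Y'' = Y' - {y. R x y}"
  have cY'': "card Y'' = card Y' - card {y\<in>Y'. R x y}"
  proof -
    have "Y'' = Y' - {y\<in>Y'. R x y}" by (auto simp: Y''_def)
    thus ?thesis using finY' by (simp add: card_Diff_subset)
  qed
  have le: "card {y\<in>Y'. R x y} \<le> card Y'" using finY' by (intro card_mono) auto
  have "real (card {y\<in>Y'. R x y}) \<le> real (card Y') * D / card X'"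
    using xb X'ne finX' by (simp add: field_simps card_gt_0_iff)
  also have "\<dots> \<le> real (card Y') * (2 * D / card X)"
  proof -
    have "D / card X' = 2 * D / (2 * card X')" by simp
    also have "\<dots> \<le> 2 * D / card X"
      by (rule divide_left_mono) (use cX'2 D cXpos in auto)
    finally have "D / card X' \<le> 2 * D / card X" .
    hence "real (card Y') * (D / card X') \<le> real (card Y') * (2 * D / card X)"
      by (rule mult_left_mono) simp
    thus ?thesis by simp
  qed
  finally have "real (card Y'') \<ge> real (card Y') * (1 - 2 * D / card X)"
    using cY'' le by (simp add: of_nat_diff algebra_simps)
  moreover have "0 \<le> 1 - 2 * D / card X" using D cXpos by (simp add: field_simps)
  ultimately have "real (card Y'') \<ge> real (card Y) * (1 - 2 * D / card X) ^ k * (1 - 2 * D / card X)"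
    using Yb by (meson mult_right_mono order_trans)
  hence Yb': "real (card Y'') \<ge> real (card Y) * (1 - 2 * D / card X) ^ Suc k"
    by (simp add: algebra_simps)
  have xS: "x \<notin> S" using x by (simp add: X'_def)
  show ?case
  proof (intro exI[of _ "insert x S"] exI[of _ Y''] conjI)
    show "insert x S \<subseteq> X" using S x X'_def by auto
    show "card (insert x S) = Suc k" using xS S fin finite_subset by fastforce
    show "Y'' \<subseteq> Y" using S Y''_def by auto
    show "\<forall>a\<in>insert x S. \<forall>y\<in>Y''. \<not> R a y" using S Y''_def by auto
  qed (rule Yb')
qed


lemma pow_bound:
  fixes C m n :: real and t :: nat
  assumes C: "C > 1" and m: "m \<ge> 16" and n: "n \<ge> 1" and t: "real t \<le> C * log 2 n + 1"
  shows "(1 - 1 / (m * C)) ^ t \<ge> exp (-1) * n powr (-1/8)"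
proof -
  define x where "x = 1 / (m * C)"
  have "16 * 1 \<le> m * C" by (rule mult_mono) (use C m in auto)
  hence mC: "m * C \<ge> 16" by simp
  have x0: "0 < x" using mC by (simp add: x_def)
  have x16: "x \<le> 1/16" using mC by (simp add: x_def field_simps)
  have lnq: "ln (1 - x) \<ge> -(9/8) * x"
  proof -
    have "- x - 2 * x\<^sup>2 \<le> ln (1 - x)" using x0 x16 by (intro ln_one_minus_pos_lower_bound) auto
    moreover have "x * x \<le> x * (1/16)" using x0 x16 by (intro mult_left_mono) auto
    hence "2 * x\<^sup>2 \<le> x / 8" by (simp add: power2_eq_square)
    ultimately show ?thesis by linarith
  qed
  have lnq0: "ln (1 - x) \<le> 0" using x0 x16 by simp
  have q0: "0 < 1 - x" using x16 by simp
  have "(1 - x) ^ t = exp (real t * ln (1 - x))"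
    using q0 by (simp add: exp_of_nat_mult)
  moreover have "real t * ln (1 - x) \<ge> -(1/8) * ln n - 1"
  proof -
    have "real t * ln (1 - x) \<ge> (C * log 2 n + 1) * ln (1 - x)"
      using t lnq0 by (simp add: mult_right_mono_neg)
    moreover have "(C * log 2 n + 1) * ln (1 - x) \<ge> (C * log 2 n + 1) * (-(9/8) * x)"
      using lnq n C by (intro mult_left_mono) auto
    moreover have "(C * log 2 n + 1) * (-(9/8) * x) = -((9/8) * (1/m) * log 2 n) - (9/8) * x"
      using C m by (simp add: x_def field_simps)
    moreover have "(9/8) * (1/m) * log 2 n \<le> (1/8) * ln n"
    proof -
      have ln2: "ln 2 \<ge> (2/3::real)" by (rule ln2_ge_two_thirds)
      have lnn: "ln n \<ge> 0" using n by simp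
      have "log 2 n = ln n / ln 2" by (simp add: log_def)
      also have "\<dots> \<le> ln n / (2/3)" by (rule divide_left_mono) (use ln2 lnn in auto)
      also have "\<dots> = ln n * (3/2)" by simp
      finally have l: "log 2 n \<le> ln n * (3/2)" .
      have "(9/8) * (1/m) \<le> 9/128" using m by (simp add: field_simps)
      moreover have "log 2 n \<ge> 0" using n by simp
      ultimately have "(9/8) * (1/m) * log 2 n \<le> 9/128 * log 2 n" by (intro mult_right_mono) auto
      also have "\<dots> \<le> 9/128 * (ln n * (3/2))" using l by simp
      also have "\<dots> \<le> (1/8) * ln n" using lnn by simp
      finally show ?thesis .
    qed
    moreover have "(9/8) * x \<le> 1" using x16 by simp
    ultimately show ?thesis by linarith
  qed
  ultimately have "(1 - x) ^ t \<ge> exp (-(1/8) * ln n - 1)" by simp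
  moreover have "exp (-(1/8) * ln n - 1) = exp (-1) * n powr (-1/8)"
  proof -
    have "exp (-(1/8) * ln n - 1) = exp (-1 + (-1/8) * ln n)" by (simp add: algebra_simps)
    also have "\<dots> = exp (-1) * exp ((-1/8) * ln n)" by (rule exp_add)
    also have "exp ((-1/8) * ln n) = n powr (-1/8)" using n by (simp add: powr_def)
    finally show ?thesis .
  qed
  ultimately show ?thesis by (simp add: x_def)
qed



lemma powr_78: "(n::real) \<ge> 1 \<Longrightarrow> n * n powr (-1/8) = n powr (7/8)"
proof -
  assume n: "n \<ge> 1"
  have "n powr (7/8) = n powr (1 + (-1/8))" by simp
  also have "\<dots> = n powr 1 * n powr (-1/8)" by (rule powr_add)
  also have "\<dots> = n * n powr (-1/8)" using n by simp
  finally show ?thesis by simp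
qed

lemma sparse:
  fixes R :: "'a \<Rightarrow> 'b \<Rightarrow> bool" and C \<eta> \<delta> n1 n2 N :: real
  assumes C: "C > 1" and eta: "0 < \<eta>" "\<eta> \<le> 1"
    and Nprop: "\<forall>n\<ge>N. C * log 2 n + 1 \<le> \<eta>/6 * n powr (7/8)"
    and n1: "n1 \<ge> N" "n1 \<ge> 1" and n2: "n2 \<ge> N" "n2 \<ge> 1"
    and finA: "finite A" and finW: "finite W"
    and Acard: "2 * real (card A) \<ge> n1"
    and Wcard: "real (card W) \<ge> 64*C*\<delta>" and dl: "\<delta> \<ge> \<eta> * n2"
    and deg: "\<forall>a\<in>A. real (card {w\<in>W. R a w}) \<le> \<delta>"
    and t1: "real t1 \<le> C * log 2 n1 + 1" and t2: "real t2 \<le> C * log 2 n2 + 1"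
  shows "\<exists>T1 T2. T1 \<subseteq> A \<and> T2 \<subseteq> W \<and> card T1 = t1 \<and> card T2 = t2 \<and> (\<forall>a\<in>T1. \<forall>w\<in>T2. \<not> R a w)"
proof -
  have P1: "C * log 2 n1 + 1 \<le> \<eta>/6 * n1 powr (7/8)" using Nprop n1 by auto
  have P2: "C * log 2 n2 + 1 \<le> \<eta>/6 * n2 powr (7/8)" using Nprop n2 by auto
  have pw1: "n1 powr (7/8) \<le> n1" using powr_mono[of "7/8" 1 n1] n1 by simp
  have pw2: "n2 powr (7/8) \<le> n2" using powr_mono[of "7/8" 1 n2] n2 by simp
  have "\<eta>/6 * n1 powr (7/8) \<le> (1/6) * n1" using pw1 eta by (intro mult_mono) auto
  hence e6: "\<eta>/6 * n1 powr (7/8) \<le> n1 / 6" by simp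
  hence t1n: "real t1 \<le> n1/6" using P1 t1 eta by linarith
  have "\<eta>/6 * n2 powr (7/8) \<le> \<eta>/6 * n2" using pw2 eta by (intro mult_left_mono) auto
  hence t2n: "real t2 \<le> (\<eta> * n2) / 6" using P2 t2 by simp
  have en2: "\<eta> * n2 > 0" using eta n2 by simp
  hence dpos: "\<delta> > 0" using dl by linarith
  have "\<delta> * 1 \<le> \<delta> * C" by (rule mult_left_mono) (use C dpos in auto)
  hence dC: "\<delta> \<le> C * \<delta>" by (simp add: algebra_simps)
  have "64*C*\<delta> > 0" using C dpos by simp
  hence Wpos: "real (card W) > 0" using Wcard by linarith
  have Apos: "real (card A) > 0" using Acard n1 by linarith
  have e3: "exp (1::real) \<le> 3" using exp_le by simp
  have epos: "exp (-1::real) > 0" by simp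
  have einv: "exp (-1::real) = 1 / exp 1" by (simp add: exp_minus field_simps)
  have "1/3 \<le> 1 / exp (1::real)" by (rule divide_left_mono) (use e3 in auto)
  hence e13: "exp (-1::real) \<ge> 1/3" using einv by simp
  show ?thesis
  proof (cases "n2 \<le> n1")
    case True
    have Cd: "2 * \<delta> \<le> real (card W)" using Wcard dC dpos by linarith
    have "64 * C * \<delta> \<ge> 64 * \<delta>" using dC by linarith
    hence "real (card W) \<ge> 64 * (\<eta> * n2)" using Wcard dl by linarith
    hence "2 * real t2 \<le> real (card W)" using t2n en2 by linarith
    hence k: "2 * t2 \<le> card W" by linarith
    obtain S Y' where S: "S \<subseteq> W" "card S = t2" "Y' \<subseteq> A" "\<forall>x\<in>S. \<forall>y\<in>Y'. \<not> R y x"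
      and Yb: "real (card Y') \<ge> real (card A) * (1 - 2 * \<delta> / card W) ^ t2"
      using greedy[of W A "\<lambda>w a. R a w" \<delta> t2] finW finA deg dpos Cd k by auto
    have "2 * \<delta> / card W \<le> 2 * \<delta> / (64 * C * \<delta>)"
      using Wcard dpos C Wpos by (intro divide_left_mono) auto
    also have "\<dots> = 1 / (32 * C)" using dpos by (simp add: field_simps)
    finally have q: "1 - 1 / (32 * C) \<le> 1 - 2 * \<delta> / card W" by simp
    have q0: "0 \<le> 1 - 1 / (32 * C)" using C by (simp add: field_simps)
    have "(1 - 1 / (32 * C)) ^ t2 \<le> (1 - 2 * \<delta> / card W) ^ t2"
      using q q0 by (intro power_mono) auto
    moreover have "(1 - 1 / (32 * C)) ^ t2 \<ge> exp (-1) * n2 powr (-1/8)"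
      using pow_bound[of C 32 n2 t2] C n2 t2 by simp
    moreover have "n2 powr (-1/8) \<ge> n1 powr (-1/8)" using powr_mono2'[of "-1/8" n2 n1] True n2 by simp
    moreover have "exp (-1) * n1 powr (-1/8) \<le> exp (-1) * n2 powr (-1/8)"
      using calculation(3) epos by (intro mult_left_mono) auto
    ultimately have "(1 - 2 * \<delta> / card W) ^ t2 \<ge> exp (-1) * n1 powr (-1/8)"
      by linarith
    hence "real (card A) * (exp (-1) * n1 powr (-1/8)) \<le> real (card A) * (1 - 2 * \<delta> / card W) ^ t2"
      by (intro mult_left_mono) auto
    hence "real (card Y') \<ge> real (card A) * (exp (-1) * n1 powr (-1/8))"
      using Yb by linarith
    moreover have "real (card A) * (exp (-1) * n1 powr (-1/8)) \<ge> (n1/2) * (exp (-1) * n1 powr (-1/8))"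
      using Acard epos by (intro mult_right_mono) auto
    moreover have "(n1/2) * (exp (-1) * n1 powr (-1/8)) = exp (-1) / 2 * n1 powr (7/8)"
      using powr_78[OF n1(2)] by (simp add: algebra_simps)
    moreover have "exp (-1) / 2 * n1 powr (7/8) \<ge> \<eta>/6 * n1 powr (7/8)"
      using e13 eta by (intro mult_right_mono) auto
    ultimately have "real (card Y') \<ge> real t1" using P1 t1 by linarith
    hence "t1 \<le> card Y'" by linarith
    then obtain T1 where T1: "T1 \<subseteq> Y'" "card T1 = t1" by (metis obtain_subset_with_card_n)
    show ?thesis using S T1 by (intro exI[of _ T1] exI[of _ S]) auto
  next
    case False
    hence n12: "n1 \<le> n2" by simp
    define D where "D = real (card A) / (32 * C)"
    define W0 where "W0 = {w\<in>W. real (card {a\<in>A. R a w}) \<le> D}"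
    define Wb where "Wb = W - W0"
    have finWb: "finite Wb" using finW by (simp add: Wb_def)
    have "(\<Sum>w\<in>W. card {a\<in>A. R a w}) = (\<Sum>a\<in>A. card {w\<in>W. R a w})"
      using double_count[OF finW finA, of "\<lambda>w a. R a w"] by simp
    hence "real (\<Sum>w\<in>W. card {a\<in>A. R a w}) = real (\<Sum>a\<in>A. card {w\<in>W. R a w})" by simp
    hence eqs: "(\<Sum>w\<in>W. real (card {a\<in>A. R a w})) = (\<Sum>a\<in>A. real (card {w\<in>W. R a w}))"
      by (simp only: of_nat_sum)
    have "(\<Sum>a\<in>A. real (card {w\<in>W. R a w})) \<le> (\<Sum>a\<in>A. \<delta>)" using deg by (intro sum_mono) auto
    hence tot: "(\<Sum>w\<in>W. real (card {a\<in>A. R a w})) \<le> real (card A) * \<delta>" using eqs by simp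
    have "(\<Sum>w\<in>Wb. D) \<le> (\<Sum>w\<in>Wb. real (card {a\<in>A. R a w}))"
      by (intro sum_mono) (auto simp: Wb_def W0_def)
    also have "\<dots> \<le> (\<Sum>w\<in>W. real (card {a\<in>A. R a w}))"
      using finW by (intro sum_mono2) (auto simp: Wb_def)
    finally have "real (card Wb) * D \<le> real (card A) * \<delta>" using tot by simp
    hence "real (card Wb) * real (card A) \<le> 32 * C * real (card A) * \<delta>"
      using C by (simp add: D_def field_simps)
    hence "real (card Wb) * real (card A) \<le> (32 * C * \<delta>) * real (card A)"
      by (simp add: algebra_simps)
    hence Wbb: "real (card Wb) \<le> 32 * C * \<delta>" using Apos by simp
    have "card Wb = card W - card W0" using finW by (simp add: Wb_def card_Diff_subset W0_def)
    moreover have "card W0 \<le> card W" using finW by (intro card_mono) (auto simp: W0_def)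
    ultimately have "real (card W0) = real (card W) - real (card Wb)" by simp
    hence W0b: "real (card W0) \<ge> 32 * C * \<delta>" using Wbb Wcard by linarith
    have finW0: "finite W0" using finW by (simp add: W0_def)
    have degW0: "\<forall>w\<in>W0. real (card {a\<in>A. R a w}) \<le> D" by (auto simp: W0_def)
    have D0: "0 \<le> D" using C by (simp add: D_def)
    have D2: "2 * D \<le> real (card A)" using C Apos by (simp add: D_def field_simps)
    have "2 * real t1 \<le> real (card A)" using t1n Acard by linarith
    hence k: "2 * t1 \<le> card A" by linarith
    obtain S Y' where S: "S \<subseteq> A" "card S = t1" "Y' \<subseteq> W0" "\<forall>x\<in>S. \<forall>y\<in>Y'. \<not> R x y"
      and Yb: "real (card Y') \<ge> real (card W0) * (1 - 2 * D / card A) ^ t1"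
      using greedy[of A W0 R D t1] finW0 finA degW0 D0 D2 k by auto
    have q: "2 * D / card A = 1 / (16 * C)" using Apos C by (simp add: D_def field_simps)
    have "(1 - 1 / (16 * C)) ^ t1 \<ge> exp (-1) * n1 powr (-1/8)"
      using pow_bound[of C 16 n1 t1] C n1 t1 by simp
    moreover have "n1 powr (-1/8) \<ge> n2 powr (-1/8)" using powr_mono2'[of "-1/8" n1 n2] n12 n1 by simp
    moreover have "exp (-1) * n2 powr (-1/8) \<le> exp (-1) * n1 powr (-1/8)"
      using calculation(2) epos by (intro mult_left_mono) auto
    ultimately have "(1 - 2 * D / card A) ^ t1 \<ge> exp (-1) * n2 powr (-1/8)"
      unfolding q by linarith
    moreover have "real (card W0) \<ge> 32 * \<eta> * n2"
    proof -
      have "32 * C * \<delta> \<ge> 32 * \<delta>" using dC by linarith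
      thus ?thesis using W0b dl by linarith
    qed
    ultimately have "(32 * \<eta> * n2) * (exp (-1) * n2 powr (-1/8)) \<le> real (card W0) * (1 - 2 * D / card A) ^ t1"
      using epos by (intro mult_mono) auto
    hence "real (card Y') \<ge> (32 * \<eta> * n2) * (exp (-1) * n2 powr (-1/8))"
      using Yb by linarith
    moreover have "(32 * \<eta> * n2) * (exp (-1) * n2 powr (-1/8)) = (32 * \<eta> * exp (-1)) * n2 powr (7/8)"
      using powr_78[OF n2(2)] by (simp add: algebra_simps)
    moreover have "(32 * \<eta> * exp (-1)) * n2 powr (7/8) \<ge> \<eta>/6 * n2 powr (7/8)"
      using e13 eta by (intro mult_right_mono) auto
    ultimately have "real (card Y') \<ge> real t2" using P2 t2 by linarith
    hence "t2 \<le> card Y'" by linarith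
    then obtain T2 where T2: "T2 \<subseteq> Y'" "card T2 = t2" by (metis obtain_subset_with_card_n)
    show ?thesis using S T2 by (intro exI[of _ S] exI[of _ T2]) (auto simp: W0_def)
  qed
qed



lemma ceil_bounds:
  fixes x :: real assumes "x \<ge> 0"
  shows "real (nat \<lceil>x\<rceil>) \<ge> x \<and> real (nat \<lceil>x\<rceil>) \<le> x + 1"
proof -
  have "real (nat \<lceil>x\<rceil>) = of_int \<lceil>x\<rceil>" using assms by simp
  moreover have "of_int \<lceil>x\<rceil> \<le> x + 1" by (rule of_int_ceiling_le_add_one)
  moreover have "x \<le> of_int \<lceil>x\<rceil>" by (rule le_of_int_ceiling)
  ultimately show ?thesis by simp
qed

lemma step:
  fixes C \<eta> \<delta> N :: real and V1 :: "'a set" and V2 :: "'b set"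
  assumes C: "C > 1" and eta: "0 < \<eta>" "\<eta> \<le> 1"
    and Nprop: "\<forall>n\<ge>N. C * log 2 n + 1 \<le> \<eta>/6 * n powr (7/8)"
    and G: "bipartite_graph V1 V2 E" and RG: "bipartite_ramsey C V1 V2 E"
    and n1: "real (card V1) \<ge> N" "real (card V1) \<ge> 1"
    and n2: "real (card V2) \<ge> N" "real (card V2) \<ge> 1"
    and W: "W \<subseteq> V2" and Wcard: "real (card W) \<ge> 64*C*\<delta>" and dl: "\<delta> \<ge> \<eta> * real (card V2)"
  shows "\<exists>v\<in>V1. real (card (nbhd V2 E v \<inter> W)) \<ge> \<delta> \<and> real (card (W - nbhd V2 E v)) \<ge> \<delta>"
proof (rule ccontr)
  assume H: "\<not> ?thesis"
  have finV1: "finite V1" and finV2: "finite V2" using G by (auto simp: bipartite_graph_def)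
  have finW: "finite W" using W finV2 finite_subset by blast
  define n1 where "n1 = real (card V1)"
  define n2 where "n2 = real (card V2)"
  have n1': "n1 \<ge> N" "n1 \<ge> 1" and n2': "n2 \<ge> N" "n2 \<ge> 1" and dl': "\<delta> \<ge> \<eta> * n2"
    using n1 n2 dl by (auto simp: n1_def n2_def)
  define t1 where "t1 = nat \<lceil>C * log 2 n1\<rceil>"
  define t2 where "t2 = nat \<lceil>C * log 2 n2\<rceil>"
  have l1: "log 2 n1 \<ge> 0" using n1 by (simp add: n1_def)
  have l2: "log 2 n2 \<ge> 0" using n2 by (simp add: n2_def)
  have c1: "C * log 2 n1 \<ge> 0" using l1 C by simp
  have c2: "C * log 2 n2 \<ge> 0" using l2 C by simp
  have t1a: "real t1 \<ge> C * log 2 n1" and t1b: "real t1 \<le> C * log 2 n1 + 1"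
    using ceil_bounds[OF c1] unfolding t1_def by auto
  have t2a: "real t2 \<ge> C * log 2 n2" and t2b: "real t2 \<le> C * log 2 n2 + 1"
    using ceil_bounds[OF c2] unfolding t2_def by auto
  have noT: "\<not> (\<exists>T1 T2. T1 \<subseteq> V1 \<and> T2 \<subseteq> V2 \<and> card T1 = t1 \<and> card T2 = t2 \<and>
               ((T1 \<times> T2 \<subseteq> E) \<or> (T1 \<times> T2) \<inter> E = {}))"
    using RG[unfolded bipartite_ramsey_def, rule_format, OF t1a[unfolded n1_def] t2a[unfolded n2_def]] .
  define A where "A = {v\<in>V1. real (card (nbhd V2 E v \<inter> W)) < \<delta>}"
  define B where "B = V1 - A"
  have Bprop: "\<forall>v\<in>B. real (card (W - nbhd V2 E v)) \<le> \<delta>"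
    using H by (auto simp: A_def B_def not_le)
  have Aprop: "\<forall>v\<in>A. real (card (nbhd V2 E v \<inter> W)) \<le> \<delta>"
    by (auto simp: A_def)
  have finA: "finite A" and finB: "finite B" using finV1 by (auto simp: A_def B_def)
  have AV: "A \<subseteq> V1" by (auto simp: A_def)
  have "card B = card V1 - card A" unfolding B_def using finA AV by (rule card_Diff_subset)
  moreover have "card A \<le> card V1" using AV finV1 by (rule card_mono[rotated])
  ultimately have "card A + card B = card V1" by simp
  hence "2 * real (card A) \<ge> n1 \<or> 2 * real (card B) \<ge> n1" unfolding n1_def by linarith
  then show False
  proof
    assume Ac: "2 * real (card A) \<ge> n1"
    have deg: "\<forall>a\<in>A. real (card {w\<in>W. (a, w) \<in> E}) \<le> \<delta>"
    proof
      fix a assume "a \<in> A"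
      moreover have "{w\<in>W. (a, w) \<in> E} = nbhd V2 E a \<inter> W" using W by (auto simp: nbhd_def)
      ultimately show "real (card {w\<in>W. (a, w) \<in> E}) \<le> \<delta>" using Aprop by simp
    qed
    obtain T1 T2 where T: "T1 \<subseteq> A" "T2 \<subseteq> W" "card T1 = t1" "card T2 = t2"
        "\<forall>a\<in>T1. \<forall>w\<in>T2. \<not> (a, w) \<in> E"
      using sparse[OF C eta(1) eta(2) Nprop n1' n2' finA finW Ac Wcard dl' deg t1b t2b] by blast
    have "T1 \<subseteq> V1" using T(1) by (auto simp: A_def)
    moreover have "(T1 \<times> T2) \<inter> E = {}" using T(5) by fast
    moreover have "T2 \<subseteq> V2" using T(2) W by (rule order_trans)
    ultimately show False using notE[OF noT] T(3,4) by blast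
  next
    assume Bc: "2 * real (card B) \<ge> n1"
    have deg: "\<forall>a\<in>B. real (card {w\<in>W. (a, w) \<notin> E}) \<le> \<delta>"
    proof
      fix a assume "a \<in> B"
      moreover have "{w\<in>W. (a, w) \<notin> E} = W - nbhd V2 E a" using W by (auto simp: nbhd_def)
      ultimately show "real (card {w\<in>W. (a, w) \<notin> E}) \<le> \<delta>" using Bprop by simp
    qed
    obtain T1 T2 where T: "T1 \<subseteq> B" "T2 \<subseteq> W" "card T1 = t1" "card T2 = t2"
        "\<forall>a\<in>T1. \<forall>w\<in>T2. \<not> (a, w) \<notin> E"
      using sparse[OF C eta(1) eta(2) Nprop n1' n2' finB finW Bc Wcard dl' deg t1b t2b] by blast
    have "T1 \<subseteq> V1" using T(1) by (auto simp: B_def)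
    moreover have "T1 \<times> T2 \<subseteq> E" using T(5) by fast
    moreover have "T2 \<subseteq> V2" using T(2) W by (rule order_trans)
    ultimately show False using notE[OF noT] T(3,4) by blast
  qed
qed



lemma asy: "(c::real) > 0 \<Longrightarrow> eventually (\<lambda>x::real. C * log 2 x + 1 \<le> c * x powr (7/8)) at_top"
  by real_asymp

theorem lemma2p3:
  fixes C :: real and L :: nat
  assumes "C > 1"
  shows "\<exists>n0 :: nat. \<forall>(V1 :: 'a set) (V2 :: 'b set) E.
           bipartite_graph V1 V2 E \<longrightarrow> bipartite_ramsey C V1 V2 E \<longrightarrow>
           card V1 \<ge> n0 \<longrightarrow> card V2 \<ge> n0 \<longrightarrow>
           (\<exists>u :: nat \<Rightarrow> 'a. (\<forall>i \<in> {1..L}. u i \<in> V1) \<and>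
              (\<forall>i \<in> {1..L}.
                 real (card (nbhd V2 E (u i) - (\<Union>j\<in>{1..<i}. nbhd V2 E (u j))))
                   \<ge> (64 * C) powr (- real i) * real (card V2) \<and>
                 real (card (V2 - (\<Union>j\<in>{1..i}. nbhd V2 E (u j))))
                   \<ge> (64 * C) powr (- real i) * real (card V2)))"
proof -
  have C: "C > 1" by fact
  define b where "b = 64 * C"
  have b1: "b > 1" using C by (simp add: b_def)
  define \<eta> where "\<eta> = b powr (- real L)"
  have eta0: "\<eta> > 0" using b1 by (simp add: \<eta>_def)
  have eta1: "\<eta> \<le> 1"
  proof -
    have "b powr (- real L) \<le> b powr 0" using b1 by (intro powr_mono) auto
    thus ?thesis using b1 by (simp add: \<eta>_def)
  qed
  have "eventually (\<lambda>x::real. C * log 2 x + 1 \<le> \<eta>/6 * x powr (7/8)) at_top"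
    using eta0 by (intro asy) simp
  then obtain N where N: "\<forall>n\<ge>N. C * log 2 n + 1 \<le> \<eta>/6 * n powr (7/8)"
    unfolding eventually_at_top_linorder by blast
  define n0 where "n0 = nat \<lceil>max N 1\<rceil>"
  have n0b: "real n0 \<ge> max N 1" unfolding n0_def by linarith
  show ?thesis
  proof (intro exI[of _ n0] allI impI)
    fix V1 :: "'a set" and V2 :: "'b set" and E
    assume G: "bipartite_graph V1 V2 E" and RG: "bipartite_ramsey C V1 V2 E"
      and c1: "n0 \<le> card V1" and c2: "n0 \<le> card V2"
    have n1: "real (card V1) \<ge> N" "real (card V1) \<ge> 1" using n0b c1 by (auto intro: order_trans)
    have n2: "real (card V2) \<ge> N" "real (card V2) \<ge> 1" using n0b c2 by (auto intro: order_trans)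
    define n2r where "n2r = real (card V2)"
    have nsub: "\<And>v. nbhd V2 E v \<subseteq> V2" by (auto simp: nbhd_def)
    have main: "m \<le> L \<Longrightarrow> \<exists>u :: nat \<Rightarrow> 'a. (\<forall>i \<in> {1..m}. u i \<in> V1) \<and>
              (\<forall>i \<in> {1..m}.
                 real (card (nbhd V2 E (u i) - (\<Union>j\<in>{1..<i}. nbhd V2 E (u j))))
                   \<ge> (64 * C) powr (- real i) * real (card V2) \<and>
                 real (card (V2 - (\<Union>j\<in>{1..i}. nbhd V2 E (u j))))
                   \<ge> (64 * C) powr (- real i) * real (card V2))" for m
    proof (induction m)
      case 0
      show ?case by auto
    next
      case (Suc m)
      then obtain u where u1: "\<forall>i \<in> {1..m}. u i \<in> V1" and
        u2: "\<forall>i \<in> {1..m}.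
                 real (card (nbhd V2 E (u i) - (\<Union>j\<in>{1..<i}. nbhd V2 E (u j))))
                   \<ge> (64 * C) powr (- real i) * real (card V2) \<and>
                 real (card (V2 - (\<Union>j\<in>{1..i}. nbhd V2 E (u j))))
                   \<ge> (64 * C) powr (- real i) * real (card V2)" by auto
      define U where "U = (\<Union>j\<in>{1..m}. nbhd V2 E (u j))"
      define W where "W = V2 - U"
      have WV: "W \<subseteq> V2" by (auto simp: W_def)
      have Wc: "real (card W) \<ge> b powr (- real m) * real (card V2)"
      proof (cases "m = 0")
        case True
        then show ?thesis using b1 by (simp add: W_def U_def)
      next
        case False
        then have "m \<in> {1..m}" by simp
        then show ?thesis using u2 by (simp add: W_def U_def b_def)
      qed
      define \<delta> where "\<delta> = b powr (- real (Suc m)) * real (card V2)"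
      have "b powr (- real m) = b powr (1 + (- real (Suc m)))" by simp
      also have "\<dots> = b powr 1 * b powr (- real (Suc m))" by (rule powr_add)
      also have "\<dots> = b * b powr (- real (Suc m))" using b1 by simp
      finally have "64 * C * \<delta> = b powr (- real m) * real (card V2)"
        by (simp add: \<delta>_def b_def)
      hence Wc': "real (card W) \<ge> 64 * C * \<delta>" using Wc by simp
      have "b powr (- real L) \<le> b powr (- real (Suc m))"
        using b1 Suc.prems by (intro powr_mono) auto
      hence dl: "\<delta> \<ge> \<eta> * real (card V2)"
        unfolding \<delta>_def \<eta>_def by (intro mult_right_mono) auto
      obtain v where v: "v \<in> V1" "real (card (nbhd V2 E v \<inter> W)) \<ge> \<delta>"
          "real (card (W - nbhd V2 E v)) \<ge> \<delta>"
        using step[OF C eta0 eta1 N G RG n1 n2 WV Wc' dl] by blast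
      define u' where "u' = u(Suc m := v)"
      have A1: "\<forall>i\<in>{1..Suc m}. u' i \<in> V1" using u1 v by (auto simp: u'_def)
      have A2: "\<forall>i\<in>{1..Suc m}. real (card (nbhd V2 E (u' i) - (\<Union>j\<in>{1..<i}. nbhd V2 E (u' j))))
                   \<ge> (64 * C) powr (- real i) * real (card V2) \<and>
                 real (card (V2 - (\<Union>j\<in>{1..i}. nbhd V2 E (u' j))))
                   \<ge> (64 * C) powr (- real i) * real (card V2)"
      proof (rule ballI)
        fix i assume i: "i \<in> {1..Suc m}"
        show "real (card (nbhd V2 E (u' i) - (\<Union>j\<in>{1..<i}. nbhd V2 E (u' j))))
                   \<ge> (64 * C) powr (- real i) * real (card V2) \<and>
                 real (card (V2 - (\<Union>j\<in>{1..i}. nbhd V2 E (u' j))))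
                   \<ge> (64 * C) powr (- real i) * real (card V2)"
        proof (cases "i = Suc m")
          case True
          have e1: "(\<Union>j\<in>{1..<i}. nbhd V2 E (u' j)) = U"
            unfolding U_def u'_def True by (intro SUP_cong) auto
          have "{1..i} = insert (Suc m) {1..m}" using True by auto
          hence e2: "(\<Union>j\<in>{1..i}. nbhd V2 E (u' j)) = U \<union> nbhd V2 E v"
            unfolding U_def u'_def by auto
          have "nbhd V2 E (u' i) - (\<Union>j\<in>{1..<i}. nbhd V2 E (u' j)) = nbhd V2 E v \<inter> W"
            using e1 nsub[of v] True by (auto simp: u'_def W_def)
          moreover have "V2 - (\<Union>j\<in>{1..i}. nbhd V2 E (u' j)) = W - nbhd V2 E v"
            using e2 by (auto simp: W_def)
          ultimately show ?thesis using v True by (simp add: \<delta>_def b_def)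
        next
          case False
          hence im: "i \<in> {1..m}" using i by auto
          have e1: "(\<Union>j\<in>{1..<i}. nbhd V2 E (u' j)) = (\<Union>j\<in>{1..<i}. nbhd V2 E (u j))"
            using im unfolding u'_def by (intro SUP_cong) auto
          have e2: "(\<Union>j\<in>{1..i}. nbhd V2 E (u' j)) = (\<Union>j\<in>{1..i}. nbhd V2 E (u j))"
            using im unfolding u'_def by (intro SUP_cong) auto
          have e3: "u' i = u i" using im by (auto simp: u'_def)
          show ?thesis unfolding e1 e2 e3 using u2 im by blast
        qed
      qed
      show ?case using A1 A2 by blast
    qed
    show "\<exists>u :: nat \<Rightarrow> 'a. (\<forall>i \<in> {1..L}. u i \<in> V1) \<and>
              (\<forall>i \<in> {1..L}.
                 real (card (nbhd V2 E (u i) - (\<Union>j\<in>{1..<i}. nbhd V2 E (u j))))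
                   \<ge> (64 * C) powr (- real i) * real (card V2) \<and>
                 real (card (V2 - (\<Union>j\<in>{1..i}. nbhd V2 E (u j))))
                   \<ge> (64 * C) powr (- real i) * real (card V2))"
      using main[of L] by simp
  qed
qed


end
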